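(* Let $H$ be a subgroup of $\operatorname{Sym}_n$ with $n\geq 3$ such that $H_2=H_{n-1}=\{\mathrm{id}\}$. Then for every $1\leq i\leq n$ there exist $1\leq j,j'\leq n$ such that $j\neq i$, $j'\neq i$, $x_ix_j\notin A$ and $x_{j'}x_i\notin\tilde A$.
   Context: $H_i=\{\sigma\in H\mid\sigma(i)=i\}$. $x_1,\dots,x_n$ are the free generators of the free monoid $\mathrm{FM}_n$. $A=\{x_{\sigma(n-1)}x_{\sigma(n)}\mid\sigma\in H\}$ and $\tilde A=\{x_{\sigma(1)}x_{\sigma(2)}\mid\sigma\in H\}$. *)

theory Defs
  imports "HOL-Algebra.Sym_Groups"
begin

definition stab :: "(nat \<Rightarrow> nat) set \<Rightarrow> nat \<Rightarrow> (nat \<Rightarrow> nat) set" where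
  "stab H i = {\<sigma> \<in> H. \<sigma> i = i}"

text \<open>Free monoid FM_n on generators x_1..x_n, modelled as words (lists) over the
  alphabet {1..n}, with concatenation as product. The generator x_i is the one-letter word.\<close>
definition gen :: "nat \<Rightarrow> nat list" where
  "gen i = [i]"

definition setA :: "nat \<Rightarrow> (nat \<Rightarrow> nat) set \<Rightarrow> nat list set" where
  "setA n H = {gen (\<sigma> (n - 1)) @ gen (\<sigma> n) | \<sigma>. \<sigma> \<in> H}"

definition setAt :: "(nat \<Rightarrow> nat) set \<Rightarrow> nat list set" where
  "setAt H = {gen (\<sigma> 1) @ gen (\<sigma> 2) | \<sigma>. \<sigma> \<in> H}"

end

theory Submission
  imports Defs
begin

lemma uniq:
  assumes sub: "subgroup H (sym_group n)" and st: "stab H k = {id}"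
    and s: "\<sigma> \<in> H" and t: "\<tau> \<in> H" and e: "\<sigma> k = \<tau> k"
  shows "\<sigma> = \<tau>"
proof -
  interpret group "sym_group n" by (rule sym_group_is_group)
  have tc: "\<tau> \<in> carrier (sym_group n)" using sub t subgroup.subset by blast
  hence tp: "\<tau> permutes {1..n}" by (simp add: sym_group_carrier)
  have "inv\<^bsub>sym_group n\<^esub> \<tau> \<otimes>\<^bsub>sym_group n\<^esub> \<sigma> \<in> H"
    using sub s t subgroup.m_closed subgroup.m_inv_closed by metis
  hence r: "inv' \<tau> \<circ> \<sigma> \<in> H" using tc by (simp add: sym_group_mult)
  have "(inv' \<tau> \<circ> \<sigma>) k = k" using e tp by (simp add: permutes_inverses(2))
  hence "inv' \<tau> \<circ> \<sigma> = id" using r st unfolding stab_def by blast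
  hence "\<tau> \<circ> (inv' \<tau> \<circ> \<sigma>) = \<tau>" by simp
  thus ?thesis using tp by (simp add: o_assoc permutes_inv_o(1))
qed

lemma two:
  assumes "(n::nat) \<ge> 3" "i \<in> {1..n}"
  shows "\<exists>a\<in>{1..n}. \<exists>b\<in>{1..n}. a \<noteq> b \<and> a \<noteq> i \<and> b \<noteq> i"
proof (cases "i = 1")
  case True thus ?thesis using assms by (intro bexI[of _ 2] bexI[of _ 3]) auto
next
  case False
  show ?thesis
  proof (cases "i = 2")
    case True thus ?thesis using assms by (intro bexI[of _ 1] bexI[of _ 3]) auto
  next
    case False2: False
    thus ?thesis using assms False by (intro bexI[of _ 1] bexI[of _ 2]) auto
  qed
qed

theorem lemma4p3:
  fixes n :: nat and H :: "(nat \<Rightarrow> nat) set"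
  assumes "n \<ge> 3"
    and "subgroup H (sym_group n)"
    and "stab H 2 = {id}" and "stab H (n - 1) = {id}"
  shows "\<forall>i\<in>{1..n}. \<exists>j\<in>{1..n}. \<exists>j'\<in>{1..n}. j \<noteq> i \<and> j' \<noteq> i \<and>
           gen i @ gen j \<notin> setA n H \<and> gen j' @ gen i \<notin> setAt H"
proof
  fix i assume i: "i \<in> {1..n}"
  obtain a b where ab: "a \<in> {1..n}" "b \<in> {1..n}" "a \<noteq> b" "a \<noteq> i" "b \<noteq> i"
    using two[OF assms(1) i] by blast
  have A: "\<exists>j\<in>{1..n}. j \<noteq> i \<and> gen i @ gen j \<notin> setA n H"
  proof (rule ccontr)
    assume "\<not> ?thesis"
    hence "[i,a] \<in> setA n H" "[i,b] \<in> setA n H" using ab by (auto simp: gen_def)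
    then obtain s t where "s \<in> H" "t \<in> H" "s (n-1) = i" "s n = a" "t (n-1) = i" "t n = b"
      unfolding setA_def gen_def by auto
    thus False using uniq[OF assms(2) assms(4)] ab by metis
  qed
  have B: "\<exists>j\<in>{1..n}. j \<noteq> i \<and> gen j @ gen i \<notin> setAt H"
  proof (rule ccontr)
    assume "\<not> ?thesis"
    hence "[a,i] \<in> setAt H" "[b,i] \<in> setAt H" using ab by (auto simp: gen_def)
    then obtain s t where "s \<in> H" "t \<in> H" "s 2 = i" "s 1 = a" "t 2 = i" "t 1 = b"
      unfolding setAt_def gen_def by auto
    thus False using uniq[OF assms(2) assms(3)] ab by metis
  qed
  show "\<exists>j\<in>{1..n}. \<exists>j'\<in>{1..n}. j \<noteq> i \<and> j' \<noteq> i \<and>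
           gen i @ gen j \<notin> setA n H \<and> gen j' @ gen i \<notin> setAt H"
    using A B by blast
qed

end
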